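(* Let $T>0$, $p>1$, $E_3\ge0$, $\gamma\in(0,pT)$, and $\epsilon\in(0,1)$. Let $\varphi,\varphi_\epsilon\in L^2(\mathbb{R})$ with $\|\varphi-\varphi_\epsilon\|\le\epsilon$, and let $u$ be the exact solution of the backward heat problem with final value $\varphi$, satisfying $$\int_{-\infty}^{\infty}e^{2\gamma\xi^2}|\hat u(\xi,0)|^2\,d\xi\le E_3^2.$$ Choose $\beta=\epsilon$, let $v_\epsilon=R_\beta\varphi_\epsilon$, and set $h=\min\{\gamma,(p-1)T\}$. Then for every $t\in[0,T]$, $$\|u(\cdot,t)-v_\epsilon(\cdot,t)\|\le \epsilon^{\frac{t+h}{pT}}(E_3+1).$$ In particular, $\|u(\cdot,0)-v_\epsilon(\cdot,0)\|\le \epsilon^{\frac{h}{pT}}(E_3+1)$.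
   Context: $\|\cdot\|$ denotes the norm of $L^2(\mathbb{R})$. The Fourier transform is $\hat\psi(\xi)=\frac{1}{\sqrt{2\pi}}\int_{-\infty}^{\infty}\psi(x)e^{-i\xi x}\,dx$ (extended to $L^2(\mathbb{R})$ as a unitary map). Exact solution: for $\varphi\in L^2(\mathbb{R})$, the exact solution $u$ of $u_t-u_{xx}=0$ on $\mathbb{R}\times(0,T)$, $u(\cdot,T)=\varphi$, is given by $\hat u(\xi,t)=e^{(T-t)\xi^2}\hat\varphi(\xi)$ for $t\in[0,T]$. Regularized solution: for $\beta>0$ and $\psi\in L^2(\mathbb{R})$, $R_\beta\psi$ is the function whose Fourier transform in $x$ is $\widehat{(R_\beta\psi)}(\xi,t)=\frac{e^{-t\xi^2}}{\beta e^{(p-1)T\xi^2}+e^{-T\xi^2}}\hat\psi(\xi)=\frac{e^{(T-t)\xi^2}}{1+\beta e^{pT\xi^2}}\hat\psi(\xi)$, $t\in[0,T]$. *)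

theory Defs
  imports "HOL-Analysis.Analysis"
begin

definition sq_int :: "(real \<Rightarrow> complex) \<Rightarrow> bool" where
  "sq_int f \<longleftrightarrow> f \<in> borel_measurable lborel \<and> integrable lborel (\<lambda>x. (cmod (f x))\<^sup>2)"

definition L2norm :: "(real \<Rightarrow> complex) \<Rightarrow> real" where
  "L2norm f = sqrt (\<integral>x. (cmod (f x))\<^sup>2 \<partial>lborel)"

text \<open>The defining properties of the L2 Fourier transform: it agrees with the integral
  (1/sqrt(2 pi)) int psi(x) e^(-i xi x) dx on L1 \<inter> L2, and is a unitary (linear, norm-preserving,
  onto) map of L2(R), identified up to a.e. equality. These properties determine it uniquely
  up to a.e. equality.\<close>
definition is_L2_fourier :: "((real \<Rightarrow> complex) \<Rightarrow> (real \<Rightarrow> complex)) \<Rightarrow> bool" where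
  "is_L2_fourier F \<longleftrightarrow>
     (\<forall>\<psi>. sq_int \<psi> \<and> integrable lborel \<psi> \<longrightarrow>
        (AE \<xi> in lborel. F \<psi> \<xi> =
            complex_of_real (1 / sqrt (2 * pi)) * (\<integral>x. \<psi> x * cis (- (\<xi> * x)) \<partial>lborel))) \<and>
     (\<forall>\<psi>. sq_int \<psi> \<longrightarrow> sq_int (F \<psi>) \<and> L2norm (F \<psi>) = L2norm \<psi>) \<and>
     (\<forall>\<psi> \<eta>. sq_int \<psi> \<and> sq_int \<eta> \<longrightarrow>
        (AE \<xi> in lborel. F (\<lambda>x. \<psi> x + \<eta> x) \<xi> = F \<psi> \<xi> + F \<eta> \<xi>)) \<and>
     (\<forall>\<psi> c. sq_int \<psi> \<longrightarrow> (AE \<xi> in lborel. F (\<lambda>x. c * \<psi> x) \<xi> = c * F \<psi> \<xi>)) \<and>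
     (\<forall>\<psi>. sq_int \<psi> \<and> (AE x in lborel. \<psi> x = 0) \<longrightarrow> (AE \<xi> in lborel. F \<psi> \<xi> = 0)) \<and>
     (\<forall>g. sq_int g \<longrightarrow> (\<exists>\<psi>. sq_int \<psi> \<and> (AE \<xi> in lborel. F \<psi> \<xi> = g \<xi>)))"

end

theory Submission imports Defs begin

lemma ptA:
  fixes \<epsilon> x T p \<gamma> t :: real
  assumes e: "0 < \<epsilon>" "\<epsilon> < 1" and x: "x \<ge> 0" and T: "T > 0" and p: "p > 1"
    and g: "0 < \<gamma>" and t: "0 \<le> t" "t \<le> T"
  shows "\<epsilon> * exp (p*T*x) / (1 + \<epsilon> * exp (p*T*x)) * exp (- (t*x))
      \<le> \<epsilon> powr ((t + min \<gamma> ((p-1)*T)) / (p*T)) * exp (\<gamma>*x)"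
proof -
  define L where "L = ln \<epsilon>"
  define y where "y = p*T*x"
  define a where "a = (t+\<gamma>)/(p*T)"
  define c where "c = (t + min \<gamma> ((p-1)*T)) / (p*T)"
  have pT: "p*T > 0" using p T by simp
  have L: "L < 0" unfolding L_def using e by simp
  have y: "y \<ge> 0" unfolding y_def using pT x by simp
  have c0: "c \<ge> 0" unfolding c_def using pT g t p T by (auto intro!: divide_nonneg_pos)
  have ca: "c \<le> a" unfolding c_def a_def using pT by (intro divide_right_mono) auto
  have c1: "c \<le> 1" unfolding c_def using pT t p T min.cobounded2[of \<gamma> "(p-1)*T"]
    by (simp add: divide_le_eq_1 algebra_simps) 
  have ay: "a*y = (t+\<gamma>)*x" unfolding a_def y_def using T p by (simp add: field_simps)
  have eps: "\<epsilon> powr c = exp (c*L)" unfolding L_def using e by (simp add: powr_def mult.commute)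
  have z: "\<epsilon> * exp y = exp (L+y)" unfolding L_def using e by (simp add: exp_add)
  have key: "exp (L+y) / (1 + exp (L+y)) \<le> exp (c*L + a*y)"
  proof (cases "L + y \<ge> 0")
    case True
    have "c*L \<ge> c*(-y)" using True c0 by (intro mult_left_mono) auto
    moreover have "a*y \<ge> c*y" using ca y by (intro mult_right_mono) auto
    ultimately have "c*L + a*y \<ge> 0" by simp
    hence "1 \<le> exp (c*L + a*y)" by simp
    moreover have "exp (L+y) / (1 + exp (L+y)) \<le> 1"
      by (simp add: divide_le_eq add_pos_pos)
    ultimately show ?thesis by linarith
  next
    case False
    have "L + y \<le> c*L + a*y"
    proof (cases "a \<le> 1")
      case True
      have "(1-a)*y \<le> (1-a)*(-L)" using True False by (intro mult_left_mono) auto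
      moreover have "(a-c)*L \<le> 0" using ca L by (intro mult_nonneg_nonpos) auto
      ultimately show ?thesis by (simp add: algebra_simps)
    next
      case False
      have "(1-a)*y \<le> 0" using False y by (intro mult_nonpos_nonneg) auto
      moreover have "(1-c)*L \<le> 0" using c1 L by (intro mult_nonneg_nonpos) auto
      ultimately show ?thesis by (simp add: algebra_simps)
    qed
    hence "exp (L+y) \<le> exp (c*L + a*y)" by simp
    moreover have "exp (L+y) / (1 + exp (L+y)) \<le> exp (L+y)"
      using exp_gt_zero[of "L+y"] by (simp add: divide_le_eq algebra_simps add_pos_pos)
    ultimately show ?thesis by linarith
  qed
  have "\<epsilon> * exp (p*T*x) / (1 + \<epsilon> * exp (p*T*x)) * exp (- (t*x))
      \<le> exp (c*L + a*y) * exp (- (t*x))"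
    using key z unfolding y_def by (intro mult_right_mono) auto
  also have "\<dots> = exp (c*L) * exp (\<gamma>*x)" unfolding ay by (simp add: exp_add[symmetric] algebra_simps)
  finally show ?thesis unfolding c_def[symmetric] eps .
qed

lemma ptB:
  fixes \<epsilon> x T p \<gamma> t :: real
  assumes e: "0 < \<epsilon>" "\<epsilon> < 1" and x: "x \<ge> 0" and T: "T > 0" and p: "p > 1"
    and g: "0 < \<gamma>" and t: "0 \<le> t" "t \<le> T"
  shows "exp ((T-t)*x) / (1 + \<epsilon> * exp (p*T*x))
      \<le> \<epsilon> powr ((t + min \<gamma> ((p-1)*T)) / (p*T)) / \<epsilon>"
proof -
  define L where "L = ln \<epsilon>"
  define y where "y = p*T*x"
  define b where "b = (T-t)/(p*T)"
  define c where "c = (t + min \<gamma> ((p-1)*T)) / (p*T)"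
  have pT: "p*T > 0" using p T by simp
  have L: "L < 0" unfolding L_def using e by simp
  have y: "y \<ge> 0" unfolding y_def using pT x by simp
  have b0: "b \<ge> 0" unfolding b_def using pT t by simp
  have c0: "c \<ge> 0" unfolding c_def using pT g t p T by (auto intro!: divide_nonneg_pos)
  have cb: "c + b \<le> 1" unfolding c_def b_def using pT t p T min.cobounded2[of \<gamma> "(p-1)*T"]
    by (simp add: add_divide_distrib[symmetric] divide_le_eq_1 algebra_simps) 
  have by': "b*y = (T-t)*x" unfolding b_def y_def using T p by (simp add: field_simps)
  have eps: "\<epsilon> powr c / \<epsilon> = exp ((c - 1)*L)" unfolding L_def using e
    by (simp add: powr_def algebra_simps exp_diff)
  have z: "\<epsilon> * exp y = exp (L+y)" unfolding L_def using e by (simp add: exp_add)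
  have "exp (b*y) \<le> exp ((c-1)*L) * (1 + exp (L+y))"
  proof (cases "L + y \<ge> 0")
    case True
    have "(1-b)*y \<ge> (1-b)*(-L)" using True cb b0 c0 by (intro mult_left_mono) auto
    moreover have "(c+b-1)*L \<ge> 0" using cb L by (intro mult_nonpos_nonpos) auto
    ultimately have "b*y \<le> (c-1)*L + (L+y)" by (simp add: algebra_simps)
    hence "exp (b*y) \<le> exp ((c-1)*L) * exp (L+y)" by (simp add: exp_add[symmetric])
    also have "\<dots> \<le> exp ((c-1)*L) * (1 + exp (L+y))" by simp
    finally show ?thesis .
  next
    case False
    have "b*y \<le> b*(-L)" using False b0 by (intro mult_left_mono) auto
    moreover have "(c+b-1)*L \<ge> 0" using cb L by (intro mult_nonpos_nonpos) auto
    ultimately have "b*y \<le> (c-1)*L" by (simp add: algebra_simps)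
    hence "exp (b*y) \<le> exp ((c-1)*L)" by simp
    also have "\<dots> \<le> exp ((c-1)*L) * (1 + exp (L+y))" by simp
    finally show ?thesis .
  qed
  hence "exp (b*y) / (1 + exp (L+y)) \<le> exp ((c-1)*L)"
    by (simp add: divide_le_eq add_pos_pos)
  hence "exp ((T-t)*x) / (1 + \<epsilon>*exp y) \<le> exp ((c-1)*L)" by (simp only: by' z)
  thus ?thesis unfolding eps c_def[symmetric] y_def .
qed

lemma mink:
  fixes f g :: "real \<Rightarrow> real" and a b :: real
  assumes fm: "f \<in> borel_measurable lborel" and gm: "g \<in> borel_measurable lborel"
    and f0: "\<And>x. f x \<ge> 0" and g0: "\<And>x. g x \<ge> 0"
    and fi: "(\<integral>\<^sup>+x. ennreal ((f x)\<^sup>2) \<partial>lborel) \<le> ennreal (a\<^sup>2)"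
    and gi: "(\<integral>\<^sup>+x. ennreal ((g x)\<^sup>2) \<partial>lborel) \<le> ennreal (b\<^sup>2)"
    and a: "a \<ge> 0" and b: "b > 0"
  shows "(\<integral>\<^sup>+x. ennreal ((f x + g x)\<^sup>2) \<partial>lborel) \<le> ennreal ((a+b)\<^sup>2)"
proof (cases "a = 0")
  case True
  have "(\<integral>\<^sup>+x. ennreal ((f x)\<^sup>2) \<partial>lborel) = 0" using fi True by simp
  hence "AE x in lborel. ennreal ((f x)\<^sup>2) = 0"
    by (subst (asm) nn_integral_0_iff_AE) (use fm in auto)
  hence "AE x in lborel. ennreal ((f x + g x)\<^sup>2) = ennreal ((g x)\<^sup>2)"
    by eventually_elim simp
  hence "(\<integral>\<^sup>+x. ennreal ((f x + g x)\<^sup>2) \<partial>lborel) = (\<integral>\<^sup>+x. ennreal ((g x)\<^sup>2) \<partial>lborel)"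
    by (rule nn_integral_cong_AE)
  thus ?thesis using gi True by simp
next
  case False
  hence a': "a > 0" using a by simp
  have pw: "(f x + g x)\<^sup>2 \<le> (1 + b/a) * (f x)\<^sup>2 + (1 + a/b) * (g x)\<^sup>2" for x
  proof -
    have "0 \<le> (b * f x - a * g x)\<^sup>2" by simp
    hence "2 * (a*b) * (f x * g x) \<le> b\<^sup>2 * (f x)\<^sup>2 + a\<^sup>2 * (g x)\<^sup>2"
      by (simp add: power2_eq_square algebra_simps)
    hence "2 * (f x * g x) \<le> (b\<^sup>2 * (f x)\<^sup>2 + a\<^sup>2 * (g x)\<^sup>2) / (a*b)"
      using a' b by (simp add: le_divide_eq algebra_simps)
    also have "\<dots> = b/a * (f x)\<^sup>2 + a/b * (g x)\<^sup>2"
      using a' b by (simp add: field_simps power2_eq_square)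
    finally show ?thesis by (simp add: power2_eq_square algebra_simps)
  qed
  have "(\<integral>\<^sup>+x. ennreal ((f x + g x)\<^sup>2) \<partial>lborel)
     \<le> (\<integral>\<^sup>+x. ennreal (1 + b/a) * ennreal ((f x)\<^sup>2) + ennreal (1 + a/b) * ennreal ((g x)\<^sup>2) \<partial>lborel)"
    using pw a' b by (intro nn_integral_mono) (simp add: ennreal_mult[symmetric] ennreal_plus[symmetric] del: ennreal_plus)
  also have "\<dots> = ennreal (1 + b/a) * (\<integral>\<^sup>+x. ennreal ((f x)\<^sup>2) \<partial>lborel)
        + ennreal (1 + a/b) * (\<integral>\<^sup>+x. ennreal ((g x)\<^sup>2) \<partial>lborel)"
    using fm gm by (simp add: nn_integral_add nn_integral_cmult)
  also have "\<dots> \<le> ennreal (1 + b/a) * ennreal (a\<^sup>2) + ennreal (1 + a/b) * ennreal (b\<^sup>2)"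
    by (intro add_mono mult_left_mono fi gi) auto
  also have "\<dots> = ennreal ((1 + b/a) * a\<^sup>2 + (1 + a/b) * b\<^sup>2)"
    using a' b by (simp add: ennreal_mult[symmetric] ennreal_plus[symmetric] del: ennreal_plus)
  also have "(1 + b/a) * a\<^sup>2 + (1 + a/b) * b\<^sup>2 = (a+b)\<^sup>2"
    using a' b by (simp add: field_simps power2_eq_square)
  finally show ?thesis .
qed

theorem theorem4:
  fixes F :: "(real \<Rightarrow> complex) \<Rightarrow> (real \<Rightarrow> complex)"
    and T p E3 \<gamma> \<epsilon> :: real
    and \<phi> \<phi>\<epsilon> :: "real \<Rightarrow> complex"
    and u v :: "real \<Rightarrow> real \<Rightarrow> complex"
  assumes F: "is_L2_fourier F"
    and T: "T > 0" and p: "p > 1" and E3: "E3 \<ge> 0"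
    and \<gamma>: "0 < \<gamma>" "\<gamma> < p * T"
    and \<epsilon>: "0 < \<epsilon>" "\<epsilon> < 1"
    and \<phi>: "sq_int \<phi>" and \<phi>\<epsilon>: "sq_int \<phi>\<epsilon>"
    and data: "L2norm (\<lambda>x. \<phi> x - \<phi>\<epsilon> x) \<le> \<epsilon>"
    and u: "\<forall>t\<in>{0..T}. sq_int (\<lambda>x. u x t) \<and>
              (AE \<xi> in lborel. F (\<lambda>x. u x t) \<xi> = exp ((T - t) * \<xi>\<^sup>2) * F \<phi> \<xi>)"
    and bound: "(\<integral>\<^sup>+ \<xi>. ennreal (exp (2 * \<gamma> * \<xi>\<^sup>2) * (cmod (F (\<lambda>x. u x 0) \<xi>))\<^sup>2) \<partial>lborel)
                  \<le> ennreal (E3\<^sup>2)"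
    and v: "\<forall>t\<in>{0..T}. sq_int (\<lambda>x. v x t) \<and>
              (AE \<xi> in lborel. F (\<lambda>x. v x t) \<xi> =
                 complex_of_real (exp ((T - t) * \<xi>\<^sup>2) / (1 + \<epsilon> * exp (p * T * \<xi>\<^sup>2))) * F \<phi>\<epsilon> \<xi>)"
  shows "(\<forall>t\<in>{0..T}. L2norm (\<lambda>x. u x t - v x t)
            \<le> \<epsilon> powr ((t + min \<gamma> ((p - 1) * T)) / (p * T)) * (E3 + 1))
       \<and> L2norm (\<lambda>x. u x 0 - v x 0) \<le> \<epsilon> powr (min \<gamma> ((p - 1) * T) / (p * T)) * (E3 + 1)"
proof -
  note Fd = F[unfolded is_L2_fourier_def]
  have F2: "sq_int (F \<psi>) \<and> L2norm (F \<psi>) = L2norm \<psi>" if "sq_int \<psi>" for \<psi>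
    using Fd that by blast
  have F3: "AE \<xi> in lborel. F (\<lambda>x. \<psi> x + \<eta> x) \<xi> = F \<psi> \<xi> + F \<eta> \<xi>"
    if "sq_int \<psi>" "sq_int \<eta>" for \<psi> \<eta> using Fd that by blast
  have F4: "AE \<xi> in lborel. F (\<lambda>x. c * \<psi> x) \<xi> = c * F \<psi> \<xi>"
    if "sq_int \<psi>" for \<psi> c using Fd that by blast
  have sq_neg: "sq_int (\<lambda>x. -1 * \<psi> x)" if "sq_int \<psi>" for \<psi>
    using that unfolding sq_int_def by (simp add: norm_minus_cancel)
  have sq_add: "sq_int (\<lambda>x. \<psi> x + \<eta> x)" if "sq_int \<psi>" "sq_int \<eta>" for \<psi> \<eta>
  proof -
    have m[measurable]: "\<psi> \<in> borel_measurable lborel" "\<eta> \<in> borel_measurable lborel"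
      using that unfolding sq_int_def by auto
    have i: "integrable lborel (\<lambda>x. 2 * (cmod (\<psi> x))\<^sup>2 + 2 * (cmod (\<eta> x))\<^sup>2)"
      using that unfolding sq_int_def by auto
    have pw: "(cmod (\<psi> x + \<eta> x))\<^sup>2 \<le> 2 * (cmod (\<psi> x))\<^sup>2 + 2 * (cmod (\<eta> x))\<^sup>2" for x
    proof -
      have "cmod (\<psi> x + \<eta> x) \<le> cmod (\<psi> x) + cmod (\<eta> x)" by (rule norm_triangle_ineq)
      hence "(cmod (\<psi> x + \<eta> x))\<^sup>2 \<le> (cmod (\<psi> x) + cmod (\<eta> x))\<^sup>2"
        by (intro power_mono) auto
      also have "\<dots> \<le> 2 * (cmod (\<psi> x))\<^sup>2 + 2 * (cmod (\<eta> x))\<^sup>2"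
        using sum_squares_ge_zero[of 0 "cmod (\<psi> x) - cmod (\<eta> x)"]
        by (simp add: power2_eq_square algebra_simps)
      finally show ?thesis .
    qed
    have "integrable lborel (\<lambda>x. (cmod (\<psi> x + \<eta> x))\<^sup>2)"
      by (rule Bochner_Integration.integrable_bound[OF i]) (use pw in auto)
    thus ?thesis unfolding sq_int_def by auto
  qed
  have Fdiff: "AE \<xi> in lborel. F (\<lambda>x. \<psi> x - \<eta> x) \<xi> = F \<psi> \<xi> - F \<eta> \<xi>"
    if "sq_int \<psi>" "sq_int \<eta>" for \<psi> \<eta>
  proof -
    have e: "(\<lambda>x. \<psi> x - \<eta> x) = (\<lambda>x. \<psi> x + (\<lambda>x. -1 * \<eta> x) x)" by simp
    show ?thesis unfolding e using F3[OF that(1) sq_neg[OF that(2)]] F4[OF that(2), of "-1"]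
      by eventually_elim simp
  qed
  have sq_diff: "sq_int (\<lambda>x. \<psi> x - \<eta> x)" if "sq_int \<psi>" "sq_int \<eta>" for \<psi> \<eta>
  proof -
    have e: "(\<lambda>x. \<psi> x - \<eta> x) = (\<lambda>x. \<psi> x + (\<lambda>x. -1 * \<eta> x) x)" by simp
    show ?thesis unfolding e by (rule sq_add[OF that(1) sq_neg[OF that(2)]])
  qed
  have L2F: "(\<integral>\<^sup>+\<xi>. ennreal ((cmod (F \<psi> \<xi>))\<^sup>2) \<partial>lborel) = ennreal ((L2norm \<psi>)\<^sup>2)"
    if "sq_int \<psi>" for \<psi>
  proof -
    have s: "sq_int (F \<psi>)" and n: "L2norm (F \<psi>) = L2norm \<psi>" using F2[OF that] by auto
    have i: "integrable lborel (\<lambda>\<xi>. (cmod (F \<psi> \<xi>))\<^sup>2)" using s unfolding sq_int_def by auto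
    have "(\<integral>\<^sup>+\<xi>. ennreal ((cmod (F \<psi> \<xi>))\<^sup>2) \<partial>lborel) = ennreal (\<integral>\<xi>. (cmod (F \<psi> \<xi>))\<^sup>2 \<partial>lborel)"
      by (rule nn_integral_eq_integral[OF i]) auto
    also have "(\<integral>\<xi>. (cmod (F \<psi> \<xi>))\<^sup>2 \<partial>lborel) = (L2norm (F \<psi>))\<^sup>2"
      unfolding L2norm_def by (simp add: integral_nonneg_AE)
    finally show ?thesis using n by simp
  qed
  have L2le: "L2norm \<psi> \<le> K"
    if "sq_int \<psi>" "(\<integral>\<^sup>+\<xi>. ennreal ((cmod (F \<psi> \<xi>))\<^sup>2) \<partial>lborel) \<le> ennreal (K\<^sup>2)" "K \<ge> 0"
    for \<psi> K
  proof -
    have "ennreal ((L2norm \<psi>)\<^sup>2) \<le> ennreal (K\<^sup>2)" using that L2F by simp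
    hence "(L2norm \<psi>)\<^sup>2 \<le> K\<^sup>2" by (simp add: ennreal_le_iff)
    thus ?thesis using that(3) by (rule power2_le_imp_le)
  qed
  define h where "h = min \<gamma> ((p - 1) * T)"
  have main: "L2norm (\<lambda>x. u x t - v x t) \<le> \<epsilon> powr ((t + h) / (p * T)) * (E3 + 1)"
    if t: "t \<in> {0..T}" for t
  proof -
    define c where "c = \<epsilon> powr ((t + h) / (p * T))"
    have c0: "c \<ge> 0" unfolding c_def by simp
    have T0: "0 \<in> {0..T}" using T by simp
    have ut: "sq_int (\<lambda>x. u x t)"
      and uF: "AE \<xi> in lborel. F (\<lambda>x. u x t) \<xi> = exp ((T - t) * \<xi>\<^sup>2) * F \<phi> \<xi>"
      using bspec[OF u t] by auto
    have u0: "sq_int (\<lambda>x. u x 0)"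
      and u0F: "AE \<xi> in lborel. F (\<lambda>x. u x 0) \<xi> = exp ((T - 0) * \<xi>\<^sup>2) * F \<phi> \<xi>"
      using bspec[OF u T0] by auto
    have vt: "sq_int (\<lambda>x. v x t)"
      and vF: "AE \<xi> in lborel. F (\<lambda>x. v x t) \<xi> =
                 complex_of_real (exp ((T - t) * \<xi>\<^sup>2) / (1 + \<epsilon> * exp (p * T * \<xi>\<^sup>2))) * F \<phi>\<epsilon> \<xi>"
      using bspec[OF v t] by auto
    define W where "W = (\<lambda>x. \<phi> x - \<phi>\<epsilon> x)"
    have W: "sq_int W" unfolding W_def by (rule sq_diff[OF \<phi> \<phi>\<epsilon>])
    have WF: "AE \<xi> in lborel. F W \<xi> = F \<phi> \<xi> - F \<phi>\<epsilon> \<xi>" unfolding W_def by (rule Fdiff[OF \<phi> \<phi>\<epsilon>])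
    define D where "D = (\<lambda>x. u x t - v x t)"
    have D: "sq_int D" unfolding D_def by (rule sq_diff[OF ut vt])
    have DF: "AE \<xi> in lborel. F D \<xi> = F (\<lambda>x. u x t) \<xi> - F (\<lambda>x. v x t) \<xi>"
      unfolding D_def by (rule Fdiff[OF ut vt])
    have [measurable]: "F (\<lambda>x. u x 0) \<in> borel_measurable lborel" "F W \<in> borel_measurable lborel"
      using F2[OF u0] F2[OF W] unfolding sq_int_def by auto
    define g1 where "g1 = (\<lambda>\<xi>. exp (\<gamma> * \<xi>\<^sup>2) * cmod (F (\<lambda>x. u x 0) \<xi>))"
    define g2 where "g2 = (\<lambda>\<xi>. cmod (F W \<xi>) / \<epsilon>)"
    have g1m: "g1 \<in> borel_measurable lborel" unfolding g1_def by measurable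
    have g2m: "g2 \<in> borel_measurable lborel" unfolding g2_def by measurable
    have g1i: "(\<integral>\<^sup>+x. ennreal ((g1 x)\<^sup>2) \<partial>lborel) \<le> ennreal (E3\<^sup>2)"
    proof -
      have "(g1 x)\<^sup>2 = exp (2 * \<gamma> * x\<^sup>2) * (cmod (F (\<lambda>x. u x 0) x))\<^sup>2" for x
        unfolding g1_def by (simp add: power_mult_distrib power2_eq_square exp_add[symmetric])
      thus ?thesis using bound by simp
    qed
    have g2i: "(\<integral>\<^sup>+x. ennreal ((g2 x)\<^sup>2) \<partial>lborel) \<le> ennreal (1\<^sup>2)"
    proof -
      have "(\<integral>\<^sup>+x. ennreal ((g2 x)\<^sup>2) \<partial>lborel)
          = (\<integral>\<^sup>+x. ennreal (1/\<epsilon>\<^sup>2) * ennreal ((cmod (F W x))\<^sup>2) \<partial>lborel)"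
        unfolding g2_def using \<epsilon> by (simp add: ennreal_mult[symmetric] power_divide)
      also have "\<dots> = ennreal (1/\<epsilon>\<^sup>2) * ennreal ((L2norm W)\<^sup>2)"
        by (simp add: nn_integral_cmult L2F[OF W])
      also have "\<dots> = ennreal ((L2norm W)\<^sup>2 / \<epsilon>\<^sup>2)"
        by (simp add: ennreal_mult[symmetric])
      also have "\<dots> \<le> ennreal (1\<^sup>2)"
      proof -
        have "L2norm W \<ge> 0" unfolding L2norm_def by simp
        hence "(L2norm W)\<^sup>2 \<le> \<epsilon>\<^sup>2" using data unfolding W_def by (intro power_mono) auto
        thus ?thesis using \<epsilon> by (intro ennreal_leI) (simp add: divide_le_eq)
      qed
      finally show ?thesis .
    qed
    have mk: "(\<integral>\<^sup>+x. ennreal ((g1 x + g2 x)\<^sup>2) \<partial>lborel) \<le> ennreal ((E3 + 1)\<^sup>2)"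
      by (rule mink[OF g1m g2m _ _ g1i g2i E3]) (use \<epsilon> in \<open>auto simp: g1_def g2_def\<close>)
    have pw: "AE \<xi> in lborel. (cmod (F D \<xi>))\<^sup>2 \<le> c\<^sup>2 * (g1 \<xi> + g2 \<xi>)\<^sup>2"
      using DF uF u0F vF WF
    proof eventually_elim
      case (elim \<xi>)
      define x where "x = \<xi>\<^sup>2"
      have x: "x \<ge> 0" unfolding x_def by simp
      define s where "s = exp (p*T*x)"
      define A where "A = \<epsilon> * s / (1 + \<epsilon> * s) * exp (- (t*x))"
      define r where "r = exp ((T-t)*x) / (1 + \<epsilon> * s)"
      have s0: "1 + \<epsilon> * s > 0" unfolding s_def using \<epsilon> by (simp add: add_pos_pos)
      have A0: "A \<ge> 0" unfolding A_def using \<epsilon> s0 by (simp add: s_def)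
      have r0: "r \<ge> 0" unfolding r_def using s0 by simp
      have id: "A * exp (T * x) + r = exp ((T-t)*x)"
      proof -
        have e: "exp (- (t*x)) * exp (T*x) = exp ((T-t)*x)" by (simp add: exp_add[symmetric] algebra_simps)
        have "A * exp (T*x) = \<epsilon> * s / (1 + \<epsilon> * s) * exp ((T-t)*x)"
          unfolding A_def e[symmetric] by (simp only: mult.assoc)
        moreover have "\<epsilon> * s / (1 + \<epsilon> * s) * E + E / (1 + \<epsilon> * s) = E" for E
        proof -
          have ne: "1 + \<epsilon> * s \<noteq> 0" using s0 by simp
          have "\<epsilon> * s / (1 + \<epsilon> * s) * E + E / (1 + \<epsilon> * s) = ((1 + \<epsilon> * s) * E) / (1 + \<epsilon> * s)"
            by (simp add: add_divide_distrib[symmetric] algebra_simps)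
          also have "\<dots> = E" using ne by simp
          finally show ?thesis .
        qed
        ultimately show ?thesis unfolding r_def by simp
      qed
      have eq: "F D \<xi> = complex_of_real A * F (\<lambda>x. u x 0) \<xi> + complex_of_real r * F W \<xi>"
      proof -
        have "F D \<xi> = complex_of_real (exp ((T-t)*x)) * F \<phi> \<xi> - complex_of_real r * F \<phi>\<epsilon> \<xi>"
          using elim unfolding r_def s_def x_def by (simp add: exp_of_real)
        also have "\<dots> = complex_of_real (A * exp (T * x) + r) * F \<phi> \<xi> - complex_of_real r * F \<phi>\<epsilon> \<xi>"
          unfolding id ..
        also have "\<dots> = complex_of_real A * F (\<lambda>x. u x 0) \<xi> + complex_of_real r * F W \<xi>"
        proof -
          have w: "F W \<xi> = F \<phi> \<xi> - F \<phi>\<epsilon> \<xi>" using elim by simp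
          have u0': "F (\<lambda>x. u x 0) \<xi> = complex_of_real (exp (T*x)) * F \<phi> \<xi>"
            using elim unfolding x_def by (simp add: exp_of_real)
          show ?thesis unfolding w u0' by (simp add: algebra_simps)
        qed
        finally show ?thesis .
      qed
      have "cmod (F D \<xi>) \<le> A * cmod (F (\<lambda>x. u x 0) \<xi>) + r * cmod (F W \<xi>)"
        unfolding eq using A0 r0 norm_triangle_ineq[of "complex_of_real A * F (\<lambda>x. u x 0) \<xi>" "complex_of_real r * F W \<xi>"]
        by (simp add: norm_mult)
      also have "\<dots> \<le> (c * exp (\<gamma> * x)) * cmod (F (\<lambda>x. u x 0) \<xi>) + (c / \<epsilon>) * cmod (F W \<xi>)"
      proof (intro add_mono mult_right_mono)
        show "A \<le> c * exp (\<gamma> * x)" unfolding A_def s_def c_def h_def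
          using ptA[OF \<epsilon> x T p \<gamma>(1)] t by auto
        show "r \<le> c / \<epsilon>" unfolding r_def s_def c_def h_def
          using ptB[OF \<epsilon> x T p \<gamma>(1)] t by auto
      qed auto
      also have "\<dots> = c * (g1 \<xi> + g2 \<xi>)" unfolding g1_def g2_def x_def by (simp add: algebra_simps)
      finally have "cmod (F D \<xi>) \<le> c * (g1 \<xi> + g2 \<xi>)" .
      hence "(cmod (F D \<xi>))\<^sup>2 \<le> (c * (g1 \<xi> + g2 \<xi>))\<^sup>2" by (intro power_mono) auto
      thus ?case by (simp add: power_mult_distrib)
    qed
    have "(\<integral>\<^sup>+\<xi>. ennreal ((cmod (F D \<xi>))\<^sup>2) \<partial>lborel)
        \<le> (\<integral>\<^sup>+\<xi>. ennreal (c\<^sup>2) * ennreal ((g1 \<xi> + g2 \<xi>)\<^sup>2) \<partial>lborel)"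
      by (intro nn_integral_mono_AE) (use pw in \<open>auto elim!: eventually_mono simp: ennreal_mult[symmetric] intro: ennreal_leI\<close>)
    also have "\<dots> = ennreal (c\<^sup>2) * (\<integral>\<^sup>+\<xi>. ennreal ((g1 \<xi> + g2 \<xi>)\<^sup>2) \<partial>lborel)"
      using g1m g2m by (simp add: nn_integral_cmult)
    also have "\<dots> \<le> ennreal (c\<^sup>2) * ennreal ((E3 + 1)\<^sup>2)"
      by (intro mult_left_mono mk) auto
    also have "\<dots> = ennreal ((c * (E3 + 1))\<^sup>2)"
      by (simp add: ennreal_mult[symmetric] power_mult_distrib)
    finally have "L2norm D \<le> c * (E3 + 1)"
      using c0 E3 by (intro L2le[OF D]) auto
    thus ?thesis unfolding D_def c_def .
  qed
  show ?thesis
  proof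
    show "\<forall>t\<in>{0..T}. L2norm (\<lambda>x. u x t - v x t)
            \<le> \<epsilon> powr ((t + min \<gamma> ((p - 1) * T)) / (p * T)) * (E3 + 1)"
      using main unfolding h_def by blast
    show "L2norm (\<lambda>x. u x 0 - v x 0) \<le> \<epsilon> powr (min \<gamma> ((p - 1) * T) / (p * T)) * (E3 + 1)"
      using main[of 0] T unfolding h_def by simp
  qed
qed

end
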